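(* Let $n\ge2$ and let $\mathcal G_n$, $\mathcal N_{0,n}$ be as in the context. Let $D=\Theta((\gamma,g,\mu),C(\mu\eta))$ be a compact open bisection in $\mathcal G_n$, where $\gamma,\mu,\eta\in X^*$ and $g\in\mathfrak G_n$. Then the following are equivalent: (1) for some $h\in\mathcal N_{0,n}$, $[(\varnothing,h,\varnothing),\mathbf 1^\infty]\in\overline D$; (2) for all $h\in\mathcal N_{0,n}$, $[(\varnothing,h,\varnothing),\mathbf 1^\infty]\in\overline D$.
   Context: Let $X=\{\mathbf 0,\mathbf 1\}$, $X^*$ the finite words (with empty word $\varnothing$), $X^\omega$ the infinite words, $C(\eta)=\{\eta w:w\in X^\omega\}$, $\mathbf 1^\infty$ the infinite word of ones. Fix $n\ge2$, a primitive polynomial $f_n$ of degree $n$ over $\mathbb F_2$ with root $\alpha$, and $\operatorname{Tr}(\beta)=\beta+\beta^2+\dots+\beta^{2^{n-1}}\in\mathbb F_2$. $\mathfrak G_n$ is the group of automorphisms of the binary rooted tree $X^*$ generated by $a$ ($a\cdot(\mathbf 0w)=\mathbf 1w$, $a\cdot(\mathbf 1w)=\mathbf 0w$) and $\iota_n(\beta)$, $\beta\in\mathbb F_{2^n}$, where $\iota_n(\beta)\cdot(\mathbf 0w)=\mathbf 0(a^{\operatorname{Tr}(\beta)}\cdot w)$, $\iota_n(\beta)\cdot(\mathbf 1w)=\mathbf 1(\iota_n(\alpha\beta)\cdot w)$; restrictions $g|_x$ are given by $g\cdot(xw)=(g\cdot x)(g|_x\cdot w)$. $\mathcal N_{0,n}=\iota_n(\mathbb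 F_{2^n})$. $\mathcal G_n$ is the groupoid of germs of the action of the inverse semigroup $\{(\eta,g,\mu)\}\cup\{0\}$ on $X^\omega$ with $(\eta,g,\mu):C(\mu)\to C(\eta)$, $\mu w\mapsto\eta(g\cdot w)$; germs $[(\eta,g,\mu),w]$, $w\in C(\mu)$, with $[(\eta,g,\mu),w]=[(\eta',g',\mu'),w']$ iff $w=w'$ and some finite prefix $\nu=\mu\epsilon=\mu'\epsilon'$ of $w$ satisfies $\eta(g\cdot\epsilon)=\eta'(g'\cdot\epsilon')$ and $g|_\epsilon=g'|_{\epsilon'}$. For $s=(\eta,g,\mu)$ and open $U\subseteq C(\mu)$, $\Theta(s,U)=\{[s,w]:w\in U\}$; these open bisections form a basis of the (non-Hausdorff) topology. $\overline D$ denotes closure in $\mathcal G_n$. *)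

theory Defs
  imports "HOL-Analysis.Analysis"
begin

text \<open>Letters: False = 0, True = 1. Finite words: bool list. Infinite words: nat \<Rightarrow> bool.
  Tree automorphisms are represented as maps on finite words.\<close>

type_synonym word = "bool list"
type_synonym iword = "nat \<Rightarrow> bool"
type_synonym tauto = "bool list \<Rightarrow> bool list"

text \<open>Trace F_{2^n} \<rightarrow> F_2 (value in {0,1} of the field).\<close>
definition trace :: "nat \<Rightarrow> 'k::field \<Rightarrow> 'k" where
  "trace n \<beta> = (\<Sum>i<n. \<beta> ^ (2 ^ i))"

fun act_a :: tauto where
  "act_a [] = []"
| "act_a (x # w) = (\<not> x) # w"

fun iota :: "nat \<Rightarrow> 'k::field \<Rightarrow> 'k \<Rightarrow> tauto" where
  "iota n \<alpha> \<beta> [] = []"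
| "iota n \<alpha> \<beta> (False # w) = False # (if trace n \<beta> = 1 then act_a w else w)"
| "iota n \<alpha> \<beta> (True # w) = True # iota n \<alpha> (\<alpha> * \<beta>) w"

inductive_set Ggrp :: "nat \<Rightarrow> 'k::field \<Rightarrow> tauto set" for n \<alpha> where
  G_id: "id \<in> Ggrp n \<alpha>"
| G_a: "act_a \<in> Ggrp n \<alpha>"
| G_iota: "iota n \<alpha> \<beta> \<in> Ggrp n \<alpha>"
| G_comp: "g \<in> Ggrp n \<alpha> \<Longrightarrow> h \<in> Ggrp n \<alpha> \<Longrightarrow> g \<circ> h \<in> Ggrp n \<alpha>"
| G_inv: "g \<in> Ggrp n \<alpha> \<Longrightarrow> inv g \<in> Ggrp n \<alpha>"

definition N0 :: "nat \<Rightarrow> 'k::field \<Rightarrow> tauto set" where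
  "N0 n \<alpha> = range (iota n \<alpha>)"

text \<open>Restriction (section) g|_x, defined by g(x w) = g(x) g|_x(w).\<close>
definition restr :: "tauto \<Rightarrow> word \<Rightarrow> tauto" where
  "restr g x = (\<lambda>w. drop (length x) (g (x @ w)))"

definition pref :: "iword \<Rightarrow> nat \<Rightarrow> word" where
  "pref w k = map w [0..<k]"

definition cyl :: "word \<Rightarrow> iword set" where
  "cyl \<eta> = {w. pref w (length \<eta>) = \<eta>}"

definition ones :: iword where
  "ones = (\<lambda>_. True)"

definition cantor_open :: "iword set \<Rightarrow> bool" where
  "cantor_open U \<longleftrightarrow> (\<forall>w\<in>U. \<exists>k. cyl (pref w k) \<subseteq> U)"

type_synonym triple = "word \<times> tauto \<times> word"

text \<open>Nonzero elements of the inverse semigroup.\<close>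
definition Striples :: "nat \<Rightarrow> 'k::field \<Rightarrow> triple set" where
  "Striples n \<alpha> = {(\<eta>, g, \<mu>). g \<in> Ggrp n \<alpha>}"

definition dom_tr :: "triple \<Rightarrow> iword set" where
  "dom_tr s = (case s of (\<eta>, g, \<mu>) \<Rightarrow> cyl \<mu>)"

definition germ_reps :: "nat \<Rightarrow> 'k::field \<Rightarrow> (triple \<times> iword) set" where
  "germ_reps n \<alpha> = {(s, w). s \<in> Striples n \<alpha> \<and> w \<in> dom_tr s}"

definition germ_rel :: "triple \<times> iword \<Rightarrow> triple \<times> iword \<Rightarrow> bool" where
  "germ_rel p q = (case p of ((\<eta>, g, \<mu>), w) \<Rightarrow> case q of ((\<eta>', g', \<mu>'), w') \<Rightarrow>
     w = w' \<and> (\<exists>k \<epsilon> \<epsilon>'. pref w k = \<mu> @ \<epsilon> \<and> pref w k = \<mu>' @ \<epsilon>' \<and>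
        \<eta> @ g \<epsilon> = \<eta>' @ g' \<epsilon>' \<and> restr g \<epsilon> = restr g' \<epsilon>'))"

definition germ :: "nat \<Rightarrow> 'k::field \<Rightarrow> triple \<Rightarrow> iword \<Rightarrow> (triple \<times> iword) set" where
  "germ n \<alpha> s w = {q \<in> germ_reps n \<alpha>. germ_rel (s, w) q}"

definition Theta :: "nat \<Rightarrow> 'k::field \<Rightarrow> triple \<Rightarrow> iword set \<Rightarrow> (triple \<times> iword) set set" where
  "Theta n \<alpha> s U = germ n \<alpha> s ` U"

text \<open>The basis of open bisections, and the topology of the groupoid of germs G_n
  (its underlying set = union of the basis = all germs).\<close>
definition Theta_basis :: "nat \<Rightarrow> 'k::field \<Rightarrow> (triple \<times> iword) set set set" where
  "Theta_basis n \<alpha> = {Theta n \<alpha> s U | s U. s \<in> Striples n \<alpha> \<and> cantor_open U \<and> U \<subseteq> dom_tr s}"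

definition Gtop :: "nat \<Rightarrow> 'k::field \<Rightarrow> (triple \<times> iword) set topology" where
  "Gtop n \<alpha> = topology_generated_by (Theta_basis n \<alpha>)"

end

theory Submission
  imports Defs
begin

lemma fin_pow_card1:
  fixes x :: "'k::{field,finite}"
  assumes "x \<noteq> 0"
  shows "x ^ (CARD('k) - 1) = 1"
proof -
  let ?N = "UNIV - {0::'k}"
  have fin: "finite ?N" by simp
  have bij: "bij_betw ((*) x) ?N ?N"
    unfolding bij_betw_def
  proof
    show "inj_on ((*) x) ?N" using assms by (auto simp: inj_on_def)
    show "(*) x ` ?N = ?N"
    proof
      show "(*) x ` ?N \<subseteq> ?N" using assms by auto
      show "?N \<subseteq> (*) x ` ?N"
      proof
        fix y assume "y \<in> ?N"
        then have "y = x * (y / x)" "y / x \<in> ?N" using assms by auto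
        then show "y \<in> (*) x ` ?N" by blast
      qed
    qed
  qed
  have "(\<Prod>y\<in>?N. x * y) = (\<Prod>y\<in>?N. y)"
    using prod.reindex_bij_betw[OF bij, of "\<lambda>y. y"] by simp
  moreover have "(\<Prod>y\<in>?N. x * y) = x ^ card ?N * (\<Prod>y\<in>?N. y)"
    by (simp add: prod.distrib)
  moreover have "(\<Prod>y\<in>?N. y) \<noteq> 0" by simp
  moreover have "card ?N = CARD('k) - 1"
    by (simp add: card_Diff_singleton)
  ultimately show ?thesis by simp
qed

lemma fin_pow_card:
  fixes x :: "'k::{field,finite}"
  shows "x ^ CARD('k) = x"
proof (cases "x = 0")
  case True then show ?thesis by simp
next
  case False
  have "CARD('k) = Suc (CARD('k) - 1)" using finite_UNIV_card_ge_0[where 'a='k] by simp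
  then have "x ^ CARD('k) = x * x ^ (CARD('k) - 1)" by (metis power_Suc)
  then show ?thesis using fin_pow_card1[OF False] by simp
qed

lemma char2:
  fixes dummy :: "'k::{field,finite}"
  assumes "CARD('k) = 2 ^ n" "n \<ge> 1"
  shows "(1::'k) + 1 = 0"
proof -
  have "even (CARD('k))" using assms by simp
  then have "(-1::'k) ^ CARD('k) = 1" by simp
  moreover have "(-1::'k) ^ CARD('k) = -1" by (rule fin_pow_card)
  ultimately have "(1::'k) = -1" by simp
  then show ?thesis by (metis add.right_inverse)
qed

lemma frob_add:
  fixes x y :: "'k::field"
  assumes c2: "(1::'k) + 1 = 0"
  shows "(x + y) ^ (2 ^ i) = x ^ (2 ^ i) + y ^ (2 ^ i)"
proof (induction i)
  case 0 then show ?case by simp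
next
  case (Suc i)
  have sq: "(a + b) ^ 2 = a ^ 2 + b ^ 2" for a b :: 'k
  proof -
    have "(a + b) ^ 2 = a ^ 2 + b ^ 2 + (1 + 1) * a * b" by (simp add: power2_eq_square algebra_simps)
    then show ?thesis using c2 by simp
  qed
  have "(x + y) ^ (2 ^ Suc i) = ((x + y) ^ (2 ^ i)) ^ 2" by (simp add: power_mult[symmetric] mult.commute)
  also have "\<dots> = (x ^ (2 ^ i)) ^ 2 + (y ^ (2 ^ i)) ^ 2" using Suc sq by simp
  also have "\<dots> = x ^ (2 ^ Suc i) + y ^ (2 ^ Suc i)" by (simp add: power_mult[symmetric] mult.commute)
  finally show ?case .
qed

lemma trace_add:
  fixes x y :: "'k::field"
  assumes c2: "(1::'k) + 1 = 0"
  shows "trace n (x + y) = trace n x + trace n y"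
  unfolding trace_def by (simp add: frob_add[OF c2] sum.distrib)

lemma trace_01:
  fixes x :: "'k::{field,finite}"
  assumes "CARD('k) = 2 ^ n" and c2: "(1::'k) + 1 = 0"
  shows "trace n x = 0 \<or> trace n x = 1"
proof -
  have sqsum: "(\<Sum>i\<in>A. f i) ^ 2 = (\<Sum>i\<in>A. (f i) ^ 2)" if "finite A" for A and f :: "nat \<Rightarrow> 'k"
    using that
  proof (induction A rule: finite_induct)
    case empty then show ?case by simp
  next
    case (insert a A)
    then show ?case using frob_add[OF c2, of "f a" "sum f A" 1] by simp
  qed
  have "(trace n x) ^ 2 = (\<Sum>i<n. (x ^ (2 ^ i)) ^ 2)" unfolding trace_def by (rule sqsum) simp
  also have "\<dots> = (\<Sum>i<n. x ^ (2 ^ Suc i))" by (simp add: power_mult[symmetric] mult.commute)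
  finally have e1: "(trace n x) ^ 2 = (\<Sum>i<n. x ^ (2 ^ Suc i))" .
  have "(\<Sum>i<n. x ^ (2 ^ Suc i)) + x ^ (2 ^ 0) = (\<Sum>i<Suc n. x ^ (2 ^ i))"
    by (simp only: sum.lessThan_Suc_shift) simp
  also have "\<dots> = trace n x + x ^ (2 ^ n)" by (simp add: trace_def)
  also have "x ^ (2 ^ n) = x" using fin_pow_card[of x] assms(1) by simp
  finally have "(trace n x) ^ 2 = trace n x" using e1 by simp
  then have "trace n x * (trace n x - 1) = 0" by (simp add: power2_eq_square algebra_simps)
  then show ?thesis by auto
qed

lemma trace_zero_often:
  fixes \<alpha> e :: "'k::{field,finite}"
  assumes card: "CARD('k) = 2 ^ n" and n2: "n \<ge> 2"
    and gen: "\<forall>x::'k. x \<noteq> 0 \<longrightarrow> (\<exists>i::nat. x = \<alpha> ^ i)"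
  shows "\<exists>r\<ge>M. trace n (\<alpha> ^ r * e) = 0"
proof (rule ccontr)
  assume H: "\<not> ?thesis"
  have c2: "(1::'k) + 1 = 0" using char2[OF card] n2 by simp
  have t01: "\<And>x::'k. trace n x = 0 \<or> trace n x = 1" using trace_01[OF card c2] by blast
  have "(2::nat) ^ 2 \<le> 2 ^ n" using n2 by (rule power_increasing) simp
  then have c4: "(4::nat) \<le> CARD('k)" using card by simp
  have "card {0::'k, 1} \<le> 2" by (simp add: card_insert_if)
  then have big: "card {0::'k, 1} < CARD('k)" using c4 by linarith
  obtain y :: 'k where y: "y \<noteq> 0" "y \<noteq> 1"
  proof -
    have "UNIV \<noteq> {0::'k, 1}" using big by (metis less_irrefl)
    then show ?thesis using that by blast
  qed
  have a0: "\<alpha> \<noteq> 0"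
  proof
    assume "\<alpha> = 0"
    then obtain i where "y = 0 ^ i" using gen y by blast
    then show False using y by (cases i) auto
  qed
  have aq: "\<alpha> ^ (CARD('k) - 1) = 1" by (rule fin_pow_card1[OF a0])
  have e0: "e \<noteq> 0"
  proof
    assume "e = 0"
    then have "trace n (\<alpha> ^ M * e) = 0" by (simp add: trace_def zero_power)
    then show False using H by blast
  qed
  have all1: "trace n c = 1" if c0: "c \<noteq> 0" for c :: 'k
  proof -
    obtain i where i: "c / e = \<alpha> ^ i" using gen c0 e0 by (metis divide_eq_0_iff)
    define r where "r = i + M * (CARD('k) - 1)"
    have "CARD('k) - 1 \<ge> 1" using big by simp
    then have rM: "r \<ge> M" unfolding r_def by (metis le_add2 mult.right_neutral mult_le_mono2 order_trans)
    have "\<alpha> ^ r = \<alpha> ^ i * (\<alpha> ^ (CARD('k) - 1)) ^ M" unfolding r_def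
      by (simp only: power_add power_mult mult.commute[of M])
    then have "\<alpha> ^ r = \<alpha> ^ i" using aq by simp
    then have "\<alpha> ^ r * e = c" using i e0 by (simp add: field_simps)
    then have "trace n c \<noteq> 0" using H rM by auto
    then show ?thesis using t01 by blast
  qed
  have "1 + y \<noteq> 0"
  proof
    assume "1 + y = 0"
    then have "y = 1" using c2 by (metis add_left_cancel)
    then show False using y by simp
  qed
  then have "trace n (1 + y) = 1" by (rule all1)
  moreover have "trace n (1 + y) = trace n 1 + trace n y" by (rule trace_add[OF c2])
  ultimately have "(1::'k) = 1 + 1" using all1 y by simp
  then show False using c2 by simp
qed

lemma act_a_len[simp]: "length (act_a w) = length w"
  by (cases w) auto

lemma act_a_invol[simp]: "act_a (act_a w) = w"
  by (cases w) auto

lemma act_a_app: "w \<noteq> [] \<Longrightarrow> act_a (w @ x) = act_a w @ x"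
  by (cases w) auto

lemma act_a_take: "take k (act_a v) = act_a (take k v)"
  by (cases v; cases k) auto

lemma iota_len[simp]: "length (iota n \<alpha> \<beta> w) = length w"
  by (induction n \<alpha> \<beta> w rule: iota.induct) auto

lemma iota_pp: "take (length u) (iota n \<alpha> \<beta> (u @ x)) = iota n \<alpha> \<beta> u"
proof (induction u arbitrary: \<beta>)
  case Nil then show ?case by simp
next
  case (Cons c u)
  then show ?case by (cases c) (auto simp: act_a_take)
qed

lemma iota_ones: "iota n \<alpha> \<beta> (replicate K True @ x) = replicate K True @ iota n \<alpha> (\<alpha> ^ K * \<beta>) x"
proof (induction K arbitrary: \<beta>)
  case 0 then show ?case by simp
next
  case (Suc K)
  then show ?case by (simp add: mult.assoc mult.commute mult.left_commute)
qed

lemma iota_invol[simp]: "iota n \<alpha> \<beta> (iota n \<alpha> \<beta> w) = w"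
  by (induction n \<alpha> \<beta> w rule: iota.induct) auto

lemma trace_zero[simp]: "trace n (0::'k::field) = 0"
  by (simp add: trace_def zero_power)

lemma iota_zero[simp]: "iota n \<alpha> (0::'k::field) w = w"
proof (induction w)
  case Nil then show ?case by simp
next
  case (Cons c w) then show ?case by (cases c) auto
qed

lemma iota_zero_fun: "iota n \<alpha> (0::'k::field) = id"
  by auto

lemma iota_comp:
  fixes y z :: "'k::field"
  assumes c2: "(1::'k) + 1 = 0" and t01: "\<forall>x::'k. trace n x = 0 \<or> trace n x = 1"
  shows "iota n \<alpha> y (iota n \<alpha> z w) = iota n \<alpha> (y + z) w"
proof (induction w arbitrary: y z)
  case Nil then show ?case by simp
next
  case (Cons c w)
  show ?case
  proof (cases c)
    case True then show ?thesis using Cons by (simp add: distrib_left)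
  next
    case False
    have ta: "trace n (y + z) = trace n y + trace n z" by (rule trace_add[OF c2])
    have "(0::'k) \<noteq> 1" by simp
    then show ?thesis using False ta t01[rule_format, of y] t01[rule_format, of z] c2
      by (auto)
  qed
qed

definition LP :: "tauto \<Rightarrow> bool" where "LP g \<longleftrightarrow> (\<forall>u. length (g u) = length u)"
definition PP :: "tauto \<Rightarrow> bool" where "PP g \<longleftrightarrow> (\<forall>u x. take (length u) (g (u @ x)) = g u)"
definition PN :: "nat \<Rightarrow> 'k::field \<Rightarrow> tauto \<Rightarrow> bool" where
  "PN n \<alpha> g \<longleftrightarrow> (\<forall>u. \<exists>K y. \<forall>x. g (u @ replicate K True @ x) = g (u @ replicate K True) @ iota n \<alpha> y x)"
definition QQ :: "nat \<Rightarrow> 'k::field \<Rightarrow> tauto \<Rightarrow> bool" where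
  "QQ n \<alpha> g \<longleftrightarrow> LP g \<and> PP g \<and> PN n \<alpha> g"

lemma LP_PP_split: "LP g \<Longrightarrow> PP g \<Longrightarrow> g (u @ x) = g u @ drop (length u) (g (u @ x))"
  unfolding PP_def by (metis append_take_drop_id)

lemma iota_ones_nil: "iota n \<alpha> \<beta> (replicate K True) = replicate K True"
  using iota_ones[of n \<alpha> \<beta> K "[]"] by simp

lemma split_u: "(\<exists>r. u = replicate r True) \<or> (\<exists>r u2. u = replicate r True @ False # u2)"
proof (induction u)
  case Nil then show ?case by (metis replicate_0)
next
  case (Cons c u)
  show ?case
  proof (cases c)
    case True
    from Cons show ?thesis
    proof
      assume "\<exists>r. u = replicate r True" then obtain r where "u = replicate r True" by blast
      then have "c # u = replicate (Suc r) True" using True by simp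
      then show ?thesis by blast
    next
      assume "\<exists>r u2. u = replicate r True @ False # u2"
      then obtain r u2 where "u = replicate r True @ False # u2" by blast
      then have "c # u = replicate (Suc r) True @ False # u2" using True by simp
      then show ?thesis by blast
    qed
  next
    case False
    then have "c # u = replicate 0 True @ False # u" by simp
    then show ?thesis by blast
  qed
qed

lemma QQ_id: "QQ n \<alpha> id"
  unfolding QQ_def LP_def PP_def PN_def
  by (auto intro!: exI[of _ 0])

lemma QQ_a: "QQ n \<alpha> act_a"
proof -
  have 1: "LP act_a" unfolding LP_def by simp
  have 2: "PP act_a" unfolding PP_def
  proof (intro allI)
    show "take (length u) (act_a (u @ x)) = act_a u" for u x
      by (cases u) auto
  qed
  have 3: "PN n \<alpha> act_a" unfolding PN_def
  proof
    fix u
    have "act_a (u @ replicate 1 True @ x) = act_a (u @ replicate 1 True) @ iota n \<alpha> 0 x" for x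
    proof -
      have "act_a (u @ replicate 1 True @ x) = act_a ((u @ [True]) @ x)" by simp
      also have "\<dots> = act_a (u @ [True]) @ x" by (rule act_a_app) simp
      finally show ?thesis by simp
    qed
    then show "\<exists>K y. \<forall>x. act_a (u @ replicate K True @ x) = act_a (u @ replicate K True) @ iota n \<alpha> y x"
      by blast
  qed
  show ?thesis using 1 2 3 unfolding QQ_def by blast
qed

lemma QQ_iota: "QQ n \<alpha> (iota n \<alpha> \<beta>)"
  unfolding QQ_def LP_def PP_def PN_def
proof (intro conjI allI)
  show "take (length u) (iota n \<alpha> \<beta> (u @ x)) = iota n \<alpha> \<beta> u" for u x by (rule iota_pp)
  show "\<exists>K y. \<forall>x. iota n \<alpha> \<beta> (u @ replicate K True @ x) = iota n \<alpha> \<beta> (u @ replicate K True) @ iota n \<alpha> y x" for u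
    using split_u[of u]
  proof
    assume "\<exists>r. u = replicate r True"
    then obtain r where u: "u = replicate r True" by blast
    show ?thesis
      by (rule exI[of _ 0], rule exI[of _ "\<alpha> ^ r * \<beta>"]) (simp add: u iota_ones iota_ones_nil)
  next
    assume "\<exists>r u2. u = replicate r True @ False # u2"
    then obtain r u2 where u: "u = replicate r True @ False # u2" by blast
    show ?thesis
      by (rule exI[of _ 1], rule exI[of _ 0]) (cases u2, simp_all add: u iota_ones)
  qed
qed simp

lemma QQ_comp:
  fixes \<alpha> :: "'k::field"
  assumes c2: "(1::'k) + 1 = 0" and t01: "\<forall>x::'k. trace n x = 0 \<or> trace n x = 1"
    and g: "QQ n \<alpha> g" and h: "QQ n \<alpha> h"
  shows "QQ n \<alpha> (g \<circ> h)"
proof -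
  have lg: "LP g" and pg: "PP g" and ng: "PN n \<alpha> g" using g unfolding QQ_def by auto
  have lh: "LP h" and ph: "PP h" and nh: "PN n \<alpha> h" using h unfolding QQ_def by auto
  have "LP (g \<circ> h)" using lg lh unfolding LP_def by simp
  moreover have "PP (g \<circ> h)" unfolding PP_def
  proof (intro allI)
    fix u x
    have "h (u @ x) = h u @ drop (length u) (h (u @ x))" by (rule LP_PP_split[OF lh ph])
    then have "take (length u) (g (h (u @ x))) = take (length (h u)) (g (h u @ drop (length u) (h (u @ x))))"
      using lh unfolding LP_def by simp
    also have "\<dots> = g (h u)" using pg unfolding PP_def by blast
    finally show "take (length u) ((g \<circ> h) (u @ x)) = (g \<circ> h) u" by simp
  qed
  moreover have "PN n \<alpha> (g \<circ> h)" unfolding PN_def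
  proof
    fix u
    obtain K1 y1 where H1: "\<And>x. h (u @ replicate K1 True @ x) = h (u @ replicate K1 True) @ iota n \<alpha> y1 x"
      using nh unfolding PN_def by blast
    define u' where "u' = h (u @ replicate K1 True)"
    obtain K2 y2 where H2: "\<And>x. g (u' @ replicate K2 True @ x) = g (u' @ replicate K2 True) @ iota n \<alpha> y2 x"
      using ng unfolding PN_def by blast
    have main: "(g \<circ> h) (u @ replicate (K1 + K2) True @ x) = g (u' @ replicate K2 True) @ iota n \<alpha> (y2 + \<alpha> ^ K2 * y1) x" for x
    proof -
      have "(g \<circ> h) (u @ replicate (K1 + K2) True @ x) = g (h (u @ replicate K1 True @ (replicate K2 True @ x)))"
        by (simp add: replicate_add)
      also have "\<dots> = g (u' @ replicate K2 True @ iota n \<alpha> (\<alpha> ^ K2 * y1) x)"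
        by (simp add: H1 u'_def iota_ones)
      also have "\<dots> = g (u' @ replicate K2 True) @ iota n \<alpha> y2 (iota n \<alpha> (\<alpha> ^ K2 * y1) x)" by (rule H2)
      also have "\<dots> = g (u' @ replicate K2 True) @ iota n \<alpha> (y2 + \<alpha> ^ K2 * y1) x"
        by (simp add: iota_comp[OF c2 t01])
      finally show ?thesis .
    qed
    have "(g \<circ> h) (u @ replicate (K1 + K2) True) = g (u' @ replicate K2 True)"
      using main[of "[]"] by simp
    then show "\<exists>K y. \<forall>x. (g \<circ> h) (u @ replicate K True @ x) = (g \<circ> h) (u @ replicate K True) @ iota n \<alpha> y x"
      using main by metis
  qed
  ultimately show ?thesis unfolding QQ_def by blast
qed

lemma Ggrp_props:
  fixes \<alpha> :: "'k::field"
  assumes c2: "(1::'k) + 1 = 0" and t01: "\<forall>x::'k. trace n x = 0 \<or> trace n x = 1"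
    and "g \<in> Ggrp n \<alpha>"
  shows "bij g \<and> QQ n \<alpha> g \<and> QQ n \<alpha> (inv g)"
  using assms(3)
proof (induction rule: Ggrp.induct)
  case G_id then show ?case by (metis QQ_id bij_id inv_id)
next
  case G_a
  have "act_a \<circ> act_a = id" by auto
  then have b: "bij act_a" by (metis bij_betw_def o_bij)
  have "inv act_a = act_a" by (rule inv_unique_comp) (auto simp: fun_eq_iff)
  then show ?case using b QQ_a by simp
next
  case (G_iota \<beta>)
  have "iota n \<alpha> \<beta> \<circ> iota n \<alpha> \<beta> = id" by auto
  then have b: "bij (iota n \<alpha> \<beta>)" by (metis o_bij)
  have "inv (iota n \<alpha> \<beta>) = iota n \<alpha> \<beta>" by (rule inv_unique_comp) (auto simp: fun_eq_iff)
  then show ?case using b QQ_iota by simp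
next
  case (G_comp g h)
  then have bg: "bij g" and bh: "bij h" and q: "QQ n \<alpha> g" "QQ n \<alpha> h" "QQ n \<alpha> (inv g)" "QQ n \<alpha> (inv h)" by auto
  have "bij (g \<circ> h)" using bg bh by (simp add: bij_comp)
  moreover have "QQ n \<alpha> (g \<circ> h)" using QQ_comp[OF c2 t01 q(1) q(2)] .
  moreover have "inv (g \<circ> h) = inv h \<circ> inv g" using bh bg by (simp add: o_inv_distrib)
  moreover have "QQ n \<alpha> (inv h \<circ> inv g)" using QQ_comp[OF c2 t01 q(4) q(3)] .
  ultimately show ?case by (simp add: comp_def)
next
  case (G_inv g)
  then show ?case by (simp add: bij_imp_bij_inv inv_inv_eq)
qed

definition rel_at :: "nat \<Rightarrow> triple \<Rightarrow> triple \<Rightarrow> iword \<Rightarrow> bool" where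
  "rel_at k s s' w = (case s of (\<eta>, g, \<mu>) \<Rightarrow> case s' of (\<eta>', g', \<mu>') \<Rightarrow>
     (\<exists>\<epsilon> \<epsilon>'. pref w k = \<mu> @ \<epsilon> \<and> pref w k = \<mu>' @ \<epsilon>' \<and>
        \<eta> @ g \<epsilon> = \<eta>' @ g' \<epsilon>' \<and> restr g \<epsilon> = restr g' \<epsilon>'))"

lemma germ_rel_iff:
  "germ_rel ((\<eta>, g, \<mu>), w) ((\<eta>', g', \<mu>'), w') \<longleftrightarrow> w = w' \<and> (\<exists>k. rel_at k (\<eta>, g, \<mu>) (\<eta>', g', \<mu>') w)"
  unfolding germ_rel_def rel_at_def by auto

lemma pref_len[simp]: "length (pref w k) = k"
  by (simp add: pref_def)

lemma pref_take: "k \<le> k' \<Longrightarrow> take k (pref w k') = pref w k"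
  by (simp add: pref_def take_map)

lemma pref_ext: "k \<le> k' \<Longrightarrow> pref w k' = pref w k @ map w [k..<k']"
  unfolding pref_def by (metis le_iff_add map_append upt_add_eq_append zero_le)

lemma pref_eq_mono: "pref v k = pref w k \<Longrightarrow> k' \<le> k \<Longrightarrow> pref v k' = pref w k'"
  by (metis pref_take)

lemma in_cyl: "w \<in> cyl p \<longleftrightarrow> pref w (length p) = p"
  by (simp add: cyl_def)

lemma rel_at_pref: "pref v k = pref w k \<Longrightarrow> rel_at k s s' w \<Longrightarrow> rel_at k s s' v"
  unfolding rel_at_def by (cases s; cases s') auto

lemma Ggrp_LP_PP:
  fixes \<alpha> :: "'k::field"
  assumes c2: "(1::'k) + 1 = 0" and t01: "\<forall>x::'k. trace n x = 0 \<or> trace n x = 1"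
    and "g \<in> Ggrp n \<alpha>"
  shows "LP g" "PP g"
  using Ggrp_props[OF assms] unfolding QQ_def by auto

lemma restr_app: "restr g (e @ x) = (\<lambda>y. drop (length x) (restr g e (x @ y)))"
  unfolding restr_def by (simp add: fun_eq_iff add.commute)

lemma g_app_restr: "LP g \<Longrightarrow> PP g \<Longrightarrow> g (e @ x) = g e @ restr g e x"
  unfolding restr_def by (rule LP_PP_split)

lemma rel_at_ext:
  assumes "LP g" "PP g" "LP g'" "PP g'" "rel_at k (\<eta>, g, \<mu>) (\<eta>', g', \<mu>') w" "k \<le> k'"
  shows "rel_at k' (\<eta>, g, \<mu>) (\<eta>', g', \<mu>') w"
proof -
  obtain e e' where h: "pref w k = \<mu> @ e" "pref w k = \<mu>' @ e'" "\<eta> @ g e = \<eta>' @ g' e'" "restr g e = restr g' e'"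
    using assms(5) unfolding rel_at_def by auto
  define x where "x = map w [k..<k']"
  have p: "pref w k' = pref w k @ x" unfolding x_def by (rule pref_ext[OF assms(6)])
  have "\<eta> @ g (e @ x) = \<eta> @ g e @ restr g e x" using g_app_restr[OF assms(1,2)] by simp
  also have "\<dots> = \<eta>' @ g' e' @ restr g' e' x" using h by (metis append_assoc)
  also have "\<dots> = \<eta>' @ g' (e' @ x)" using g_app_restr[OF assms(3,4)] by simp
  finally have 1: "\<eta> @ g (e @ x) = \<eta>' @ g' (e' @ x)" .
  have 2: "restr g (e @ x) = restr g' (e' @ x)" using h(4) by (simp add: restr_app)
  have 3: "pref w k' = \<mu> @ (e @ x)" "pref w k' = \<mu>' @ (e' @ x)" using p h by simp_all
  show ?thesis unfolding rel_at_def using 1 2 3 by blast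
qed

lemma rel_at_sym: "rel_at k (\<eta>, g, \<mu>) (\<eta>', g', \<mu>') w \<Longrightarrow> rel_at k (\<eta>', g', \<mu>') (\<eta>, g, \<mu>) w"
  unfolding rel_at_def by auto

lemma rel_at_trans:
  assumes "LP g1" "PP g1" "LP g2" "PP g2" "LP g3" "PP g3"
    and "rel_at k1 (\<eta>1, g1, \<mu>1) (\<eta>2, g2, \<mu>2) w" "rel_at k2 (\<eta>2, g2, \<mu>2) (\<eta>3, g3, \<mu>3) w"
  shows "rel_at (max k1 k2) (\<eta>1, g1, \<mu>1) (\<eta>3, g3, \<mu>3) w"
proof -
  have a: "rel_at (max k1 k2) (\<eta>1, g1, \<mu>1) (\<eta>2, g2, \<mu>2) w"
    using rel_at_ext[OF assms(1-4) assms(7)] by simp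
  have b: "rel_at (max k1 k2) (\<eta>2, g2, \<mu>2) (\<eta>3, g3, \<mu>3) w"
    using rel_at_ext[OF assms(3-6) assms(8)] by simp
  obtain e1 e2 where A: "pref w (max k1 k2) = \<mu>1 @ e1" "pref w (max k1 k2) = \<mu>2 @ e2"
      "\<eta>1 @ g1 e1 = \<eta>2 @ g2 e2" "restr g1 e1 = restr g2 e2"
    using a unfolding rel_at_def by auto
  obtain f2 f3 where B: "pref w (max k1 k2) = \<mu>2 @ f2" "pref w (max k1 k2) = \<mu>3 @ f3"
      "\<eta>2 @ g2 f2 = \<eta>3 @ g3 f3" "restr g2 f2 = restr g3 f3"
    using b unfolding rel_at_def by auto
  have "e2 = f2" using A(2) B(1) by simp
  then have "\<eta>1 @ g1 e1 = \<eta>3 @ g3 f3" "restr g1 e1 = restr g3 f3" using A B by auto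
  then show ?thesis unfolding rel_at_def using A(1) B(2) by blast
qed

lemma germ_rel_sym: "germ_rel p q \<Longrightarrow> germ_rel q p"
proof -
  assume a: "germ_rel p q"
  obtain \<eta>1 g1 \<mu>1 w1 where p: "p = ((\<eta>1, g1, \<mu>1), w1)" by (metis prod.exhaust)
  obtain \<eta>2 g2 \<mu>2 w2 where q: "q = ((\<eta>2, g2, \<mu>2), w2)" by (metis prod.exhaust)
  show ?thesis using a unfolding p q germ_rel_iff using rel_at_sym by metis
qed

lemma germ_reps_iff: "((\<eta>, g, \<mu>), w) \<in> germ_reps n \<alpha> \<longleftrightarrow> g \<in> Ggrp n \<alpha> \<and> w \<in> cyl \<mu>"
  unfolding germ_reps_def Striples_def dom_tr_def by auto

lemma germ_rel_trans:
  fixes \<alpha> :: "'k::field"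
  assumes c2: "(1::'k) + 1 = 0" and t01: "\<forall>x::'k. trace n x = 0 \<or> trace n x = 1"
    and "p \<in> germ_reps n \<alpha>" "q \<in> germ_reps n \<alpha>" "r \<in> germ_reps n \<alpha>"
    and "germ_rel p q" "germ_rel q r"
  shows "germ_rel p r"
proof -
  obtain \<eta>1 g1 \<mu>1 w1 where p: "p = ((\<eta>1, g1, \<mu>1), w1)" by (metis prod.exhaust)
  obtain \<eta>2 g2 \<mu>2 w2 where q: "q = ((\<eta>2, g2, \<mu>2), w2)" by (metis prod.exhaust)
  obtain \<eta>3 g3 \<mu>3 w3 where r: "r = ((\<eta>3, g3, \<mu>3), w3)" by (metis prod.exhaust)
  have G: "g1 \<in> Ggrp n \<alpha>" "g2 \<in> Ggrp n \<alpha>" "g3 \<in> Ggrp n \<alpha>"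
    using assms(3-5) unfolding p q r germ_reps_iff by auto
  note L = Ggrp_LP_PP[OF c2 t01 G(1)] Ggrp_LP_PP[OF c2 t01 G(2)] Ggrp_LP_PP[OF c2 t01 G(3)]
  obtain k1 where 1: "w1 = w2" "rel_at k1 (\<eta>1, g1, \<mu>1) (\<eta>2, g2, \<mu>2) w1"
    using assms(6) p q germ_rel_iff by auto
  obtain k2 where 2: "w2 = w3" "rel_at k2 (\<eta>2, g2, \<mu>2) (\<eta>3, g3, \<mu>3) w1"
    using assms(7) q r germ_rel_iff 1(1) by auto
  show ?thesis using rel_at_trans[OF L 1(2) 2(2)] 1(1) 2(1) p r germ_rel_iff by auto
qed

lemma germ_eq:
  fixes \<alpha> :: "'k::field"
  assumes c2: "(1::'k) + 1 = 0" and t01: "\<forall>x::'k. trace n x = 0 \<or> trace n x = 1"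
    and "(s, w) \<in> germ_reps n \<alpha>" "(s', w') \<in> germ_reps n \<alpha>" "germ_rel (s, w) (s', w')"
  shows "germ n \<alpha> s w = germ n \<alpha> s' w'"
  unfolding germ_def
  using germ_rel_trans[OF c2 t01] germ_rel_sym assms(3-5) by blast

lemma germ_rel_refl:
  assumes "w \<in> cyl \<mu>"
  shows "germ_rel ((\<eta>, g, \<mu>), w) ((\<eta>, g, \<mu>), w)"
proof -
  have "rel_at (length \<mu>) (\<eta>, g, \<mu>) (\<eta>, g, \<mu>) w"
    unfolding rel_at_def using assms by (simp add: in_cyl)
  then show ?thesis using germ_rel_iff by blast
qed

lemma germ_self:
  assumes "g \<in> Ggrp n \<alpha>" "w \<in> cyl \<mu>"
  shows "((\<eta>, g, \<mu>), w) \<in> germ n \<alpha> (\<eta>, g, \<mu>) w"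
  unfolding germ_def using assms germ_rel_refl germ_reps_iff by blast

lemma germ_mem_rel:
  assumes "((\<eta>', g', \<mu>'), w') \<in> germ n \<alpha> (\<eta>, g, \<mu>) w"
  shows "w = w' \<and> (\<exists>k. rel_at k (\<eta>, g, \<mu>) (\<eta>', g', \<mu>') w)"
  using assms unfolding germ_def using germ_rel_iff by blast

lemma cantor_open_cyl: "cantor_open (cyl p)"
  unfolding cantor_open_def by (auto simp: in_cyl intro: exI[of _ "length p"])

lemma cyl_app_sub: "cyl (p @ q) \<subseteq> cyl p"
proof
  fix x assume "x \<in> cyl (p @ q)"
  then have "pref x (length p + length q) = p @ q" by (simp add: in_cyl)
  then have "take (length p) (pref x (length p + length q)) = p" by simp
  then show "x \<in> cyl p" by (simp add: in_cyl pref_take)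
qed

lemma Theta_open:
  assumes "g \<in> Ggrp n \<alpha>" "U \<subseteq> cyl \<mu>" "cantor_open U"
  shows "openin (Gtop n \<alpha>) (Theta n \<alpha> (\<eta>, g, \<mu>) U)"
proof -
  have "Theta n \<alpha> (\<eta>, g, \<mu>) U \<in> Theta_basis n \<alpha>"
    unfolding Theta_basis_def Striples_def dom_tr_def using assms by auto
  then show ?thesis unfolding Gtop_def openin_topology_generated_by_iff
    by (rule generate_topology_on.Basis)
qed

lemma nbhd:
  fixes \<alpha> :: "'k::field"
  assumes c2: "(1::'k) + 1 = 0" and t01: "\<forall>x::'k. trace n x = 0 \<or> trace n x = 1"
    and T: "generate_topology_on (Theta_basis n \<alpha>) T"
    and g0: "g0 \<in> Ggrp n \<alpha>" and w0: "w0 \<in> cyl \<mu>0"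
  shows "germ n \<alpha> (\<eta>0, g0, \<mu>0) w0 \<in> T \<Longrightarrow> \<exists>k. \<forall>v. pref v k = pref w0 k \<longrightarrow> germ n \<alpha> (\<eta>0, g0, \<mu>0) v \<in> T"
  using T
proof (induction rule: generate_topology_on.induct)
  case Empty then show ?case by simp
next
  case (Int a b)
  then obtain k1 k2 where k1: "\<forall>v. pref v k1 = pref w0 k1 \<longrightarrow> germ n \<alpha> (\<eta>0, g0, \<mu>0) v \<in> a"
    and k2: "\<forall>v. pref v k2 = pref w0 k2 \<longrightarrow> germ n \<alpha> (\<eta>0, g0, \<mu>0) v \<in> b" by auto
  show ?case
  proof (intro exI[of _ "max k1 k2"] allI impI)
    fix v assume "pref v (max k1 k2) = pref w0 (max k1 k2)"
    then have "pref v k1 = pref w0 k1" "pref v k2 = pref w0 k2" using pref_eq_mono[of v "max k1 k2" w0] by auto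
    then show "germ n \<alpha> (\<eta>0, g0, \<mu>0) v \<in> a \<inter> b" using k1 k2 by auto
  qed
next
  case (UN K)
  then obtain k where "k \<in> K" "germ n \<alpha> (\<eta>0, g0, \<mu>0) w0 \<in> k" by auto
  then show ?case using UN.IH by blast
next
  case (Basis s)
  then obtain \<eta> g \<mu> U where s: "s = Theta n \<alpha> (\<eta>, g, \<mu>) U" and g: "g \<in> Ggrp n \<alpha>"
    and U: "cantor_open U" "U \<subseteq> cyl \<mu>"
    unfolding Theta_basis_def Striples_def dom_tr_def by auto
  from Basis.prems obtain u where u: "u \<in> U" "germ n \<alpha> (\<eta>0, g0, \<mu>0) w0 = germ n \<alpha> (\<eta>, g, \<mu>) u"
    unfolding s Theta_def by auto
  have "((\<eta>0, g0, \<mu>0), w0) \<in> germ n \<alpha> (\<eta>, g, \<mu>) u" using germ_self[OF g0 w0, of \<eta>0] u(2) by simp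
  from germ_mem_rel[OF this] obtain k1 where uw: "u = w0" and k1: "rel_at k1 (\<eta>, g, \<mu>) (\<eta>0, g0, \<mu>0) w0"
    by auto
  obtain k2 where k2: "cyl (pref w0 k2) \<subseteq> U" using U(1) u(1) uw unfolding cantor_open_def by auto
  show ?case
  proof (intro exI[of _ "max k1 k2"] allI impI)
    fix v assume "pref v (max k1 k2) = pref w0 (max k1 k2)"
    then have p1: "pref v k1 = pref w0 k1" and p2: "pref v k2 = pref w0 k2" using pref_eq_mono[of v "max k1 k2" w0] by auto
    have vU: "v \<in> U" using k2 p2 by (auto simp: in_cyl)
    have r: "rel_at k1 (\<eta>, g, \<mu>) (\<eta>0, g0, \<mu>0) v" by (rule rel_at_pref[OF p1 k1])
    have vm: "v \<in> cyl \<mu>" using vU U(2) by auto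
    have vm0: "v \<in> cyl \<mu>0"
    proof -
      obtain e where "pref w0 k1 = \<mu>0 @ e" using k1 unfolding rel_at_def by auto
      then have "pref v k1 = \<mu>0 @ e" using p1 by simp
      then have "pref v (length \<mu>0) = \<mu>0"
        by (metis append_eq_conv_conj le_add1 length_append pref_len pref_take)
      then show ?thesis by (simp add: in_cyl)
    qed
    have "germ n \<alpha> (\<eta>, g, \<mu>) v = germ n \<alpha> (\<eta>0, g0, \<mu>0) v"
      by (rule germ_eq[OF c2 t01]) (use g g0 vm vm0 r in \<open>auto simp: germ_reps_iff germ_rel_iff\<close>)
    then show "germ n \<alpha> (\<eta>0, g0, \<mu>0) v \<in> s" unfolding s Theta_def using vU by (metis image_eqI)
  qed
qed

lemma pref_ones: "pref ones m = replicate m True"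
  by (simp add: pref_def ones_def map_replicate_const)

lemma pref_spike:
  fixes p :: nat
  defines "v \<equiv> (\<lambda>i. i \<noteq> p \<and> i \<noteq> Suc p)"
  shows "N \<le> p \<Longrightarrow> pref v N = replicate N True"
    and "pref v (p + 2) = replicate p True @ [False, False]"
proof -
  have A: "N \<le> p \<Longrightarrow> map v [0..<N] = replicate N True" for N
    by (induction N) (auto simp: v_def replicate_append_same)
  show "N \<le> p \<Longrightarrow> pref v N = replicate N True" using A by (simp add: pref_def)
  have "[0..<p + 2] = [0..<p] @ [p, Suc p]" by simp
  then show "pref v (p + 2) = replicate p True @ [False, False]" using A[of p] by (simp add: pref_def v_def)
qed

lemma iota_FF: "iota n \<alpha> \<beta> [False, False] = [False, trace n \<beta> = 1]"
  by simp

lemma restr_iota_FF: "restr (iota n \<alpha> \<beta>) (replicate p True @ [False, False]) = id"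
  unfolding restr_def by (auto simp: fun_eq_iff iota_ones)

lemma bits_eq:
  fixes a b :: "'k::field"
  assumes c2: "(1::'k) + 1 = 0" and t01: "\<forall>x::'k. trace n x = 0 \<or> trace n x = 1"
    and "trace n (a + b) = 0"
  shows "(trace n a = 1) = (trace n b = 1)"
proof -
  have "trace n a + trace n b = 0" using assms(3) trace_add[OF c2] by simp
  moreover have "(0::'k) \<noteq> 1" by simp
  ultimately show ?thesis using t01[rule_format, of a] t01[rule_format, of b] c2 by auto
qed

lemma transfer:
  fixes n :: nat and \<alpha> \<beta> \<beta>' :: "'k::{field,finite}"
    and \<gamma> \<mu> \<eta> :: "bool list" and g :: "bool list \<Rightarrow> bool list"
  assumes n2: "n \<ge> 2"
    and card: "CARD('k) = 2 ^ n"
    and gen: "\<forall>x::'k. x \<noteq> 0 \<longrightarrow> (\<exists>i::nat. x = \<alpha> ^ i)"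
    and gG: "g \<in> Ggrp n \<alpha>"
    and H: "germ n \<alpha> ([], iota n \<alpha> \<beta>, []) ones \<in> Gtop n \<alpha> closure_of Theta n \<alpha> (\<gamma>, g, \<mu>) (cyl (\<mu> @ \<eta>))"
  shows "germ n \<alpha> ([], iota n \<alpha> \<beta>', []) ones \<in> Gtop n \<alpha> closure_of Theta n \<alpha> (\<gamma>, g, \<mu>) (cyl (\<mu> @ \<eta>))"
proof -
  have c2: "(1::'k) + 1 = 0" using char2[OF card] n2 by simp
  have t01: "\<forall>x::'k. trace n x = 0 \<or> trace n x = 1" using trace_01[OF card c2] by blast
  have QQg: "QQ n \<alpha> g" using Ggrp_props[OF c2 t01 gG] by blast
  then have LPg: "LP g" and PPg: "PP g" and PNg: "PN n \<alpha> g" unfolding QQ_def by auto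
  obtain K0 y where K0': "\<forall>x. g ([] @ replicate K0 True @ x) = g ([] @ replicate K0 True) @ iota n \<alpha> y x"
    using PNg unfolding PN_def by blast
  have K0: "\<And>x. g (replicate K0 True @ x) = g (replicate K0 True) @ iota n \<alpha> y x"
    using K0' by simp
  have gK0len: "length (g (replicate K0 True)) = K0" using LPg unfolding LP_def by simp
  have iG: "\<And>b. iota n \<alpha> b \<in> Ggrp n \<alpha>" by (rule Ggrp.G_iota)
  have LPi: "\<And>b. LP (iota n \<alpha> b)" and PPi: "\<And>b. PP (iota n \<alpha> b)"
    using QQ_iota unfolding QQ_def by blast+
  have cylnil: "\<And>w. w \<in> cyl []" by (simp add: in_cyl pref_def)
  define j1 where "j1 = length \<mu>"
  define L where "L = length (\<mu> @ \<eta>)"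
  define m where "m = L + j1 + K0"
  define D where "D = Theta n \<alpha> (\<gamma>, g, \<mu>) (cyl (\<mu> @ \<eta>))"
  define Onb where "Onb = Theta n \<alpha> ([], iota n \<alpha> \<beta>, []) (cyl (replicate m True))"
  have Oopen: "openin (Gtop n \<alpha>) Onb" unfolding Onb_def
    by (rule Theta_open[OF iG]) (auto simp: cylnil cantor_open_cyl)
  have onesO: "germ n \<alpha> ([], iota n \<alpha> \<beta>, []) ones \<in> Onb"
    unfolding Onb_def Theta_def by (rule imageI) (simp add: in_cyl pref_ones)
  obtain d where dD: "d \<in> D" and dO: "d \<in> Onb" using H Oopen onesO unfolding in_closure_of D_def by blast
  obtain w where w: "w \<in> cyl (\<mu> @ \<eta>)" and dw: "d = germ n \<alpha> (\<gamma>, g, \<mu>) w"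
    using dD unfolding D_def Theta_def by (rule imageE) blast
  obtain w' where w': "w' \<in> cyl (replicate m True)" and dw': "d = germ n \<alpha> ([], iota n \<alpha> \<beta>, []) w'"
    using dO unfolding Onb_def Theta_def by (rule imageE) blast
  have dd: "germ n \<alpha> (\<gamma>, g, \<mu>) w = germ n \<alpha> ([], iota n \<alpha> \<beta>, []) w'" using dw dw' by simp
  have wmu: "w \<in> cyl \<mu>" using w cyl_app_sub by blast
  have "((\<gamma>, g, \<mu>), w) \<in> germ n \<alpha> ([], iota n \<alpha> \<beta>, []) w'" using germ_self[OF gG wmu, of \<gamma>] dd by simp
  from germ_mem_rel[OF this] obtain k where ww: "w' = w" and rk: "rel_at k ([], iota n \<alpha> \<beta>, []) (\<gamma>, g, \<mu>) w"
    by auto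
  define K' where "K' = max k m"
  have "rel_at K' ([], iota n \<alpha> \<beta>, []) (\<gamma>, g, \<mu>) w"
    by (rule rel_at_ext[OF LPi PPi LPg PPg rk]) (simp add: K'_def)
  then obtain e e' where E: "pref w K' = e" "pref w K' = \<mu> @ e'" "iota n \<alpha> \<beta> e = \<gamma> @ g e'"
    unfolding rel_at_def by auto
  have wm: "pref w m = replicate m True" using w' ww by (simp add: in_cyl)
  have mK: "m \<le> K'" by (simp add: K'_def)
  have prefR: "N \<le> m \<Longrightarrow> pref w N = replicate N True" for N
  proof -
    assume "N \<le> m"
    then have "pref w N = take N (pref w m)" by (simp add: pref_take)
    then show ?thesis using wm \<open>N \<le> m\<close> by (simp add: min_def)
  qed
  have muetaR: "\<mu> @ \<eta> = replicate L True"
  proof -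
    have "pref w L = \<mu> @ \<eta>" using w unfolding in_cyl L_def .
    moreover have "L \<le> m" unfolding m_def by simp
    ultimately show ?thesis using prefR[of L] by simp
  qed
  have muR: "\<mu> = replicate j1 True"
  proof -
    have "take j1 (\<mu> @ \<eta>) = \<mu>" by (simp add: j1_def)
    moreover have "j1 \<le> L" unfolding L_def j1_def by simp
    ultimately show ?thesis using muetaR by (simp add: min_def)
  qed
  have key: "\<gamma> @ g (replicate K0 True) = replicate (j1 + K0) True"
  proof -
    define P where "P = pref w K'"
    have lenP: "length P = K'" by (simp add: P_def)
    have tP: "take (j1 + K0) P = replicate (j1 + K0) True"
      unfolding P_def using pref_take[of "j1+K0" K' w] prefR[of "j1+K0"] mK by (simp add: m_def)
    have e'P: "e' = drop j1 P" using E(2) unfolding P_def by (simp add: j1_def)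
    have lene': "length e' = K' - j1" using e'P lenP by simp
    have j1K: "j1 + K0 \<le> K'" using mK by (simp add: m_def)
    have lg: "length \<gamma> = j1"
    proof -
      have "length (iota n \<alpha> \<beta> e) = K'" using E(1)[symmetric] by simp
      then have "length \<gamma> + length (g e') = K'" using E(3) by simp
      then show ?thesis using lene' LPg j1K unfolding LP_def by simp
    qed
    have "take (j1 + K0) (iota n \<alpha> \<beta> P) = iota n \<alpha> \<beta> (take (j1 + K0) P)"
    proof -
      have "take (length (take (j1 + K0) P)) (iota n \<alpha> \<beta> (take (j1 + K0) P @ drop (j1 + K0) P)) = iota n \<alpha> \<beta> (take (j1 + K0) P)"
        using PPi[of \<beta>] unfolding PP_def by blast
      moreover have "length (take (j1 + K0) P) = j1 + K0" using j1K lenP by simp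
      ultimately show ?thesis by (simp only: append_take_drop_id)
    qed
    also have "\<dots> = replicate (j1 + K0) True" using tP by (simp add: iota_ones_nil)
    finally have A: "take (j1 + K0) (iota n \<alpha> \<beta> P) = replicate (j1 + K0) True" .
    have te': "take K0 e' = replicate K0 True"
    proof -
      have "take K0 e' = drop j1 (take (j1 + K0) P)" using e'P by (simp add: take_drop add.commute)
      also have "\<dots> = replicate K0 True" using tP by simp
      finally show ?thesis .
    qed
    have "take (j1 + K0) (\<gamma> @ g e') = \<gamma> @ take K0 (g e')" using lg by simp
    also have "take K0 (g e') = g (take K0 e')"
    proof -
      have "take (length (take K0 e')) (g (take K0 e' @ drop K0 e')) = g (take K0 e')"
        using PPg unfolding PP_def by blast
      moreover have "length (take K0 e') = K0" using lene' j1K by simp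
      ultimately show ?thesis by (simp only: append_take_drop_id)
    qed
    finally have B: "take (j1 + K0) (\<gamma> @ g e') = \<gamma> @ g (replicate K0 True)" using te' by simp
    show ?thesis using A B E(1) E(3) unfolding P_def by simp
  qed
  show ?thesis
    unfolding in_closure_of D_def[symmetric]
  proof (intro conjI allI impI)
    have "Theta n \<alpha> ([], iota n \<alpha> \<beta>', []) (cyl []) \<in> Theta_basis n \<alpha>"
      unfolding Theta_basis_def Striples_def dom_tr_def using iG cantor_open_cyl by blast
    moreover have "germ n \<alpha> ([], iota n \<alpha> \<beta>', []) ones \<in> Theta n \<alpha> ([], iota n \<alpha> \<beta>', []) (cyl [])"
      unfolding Theta_def using cylnil by blast
    ultimately show "germ n \<alpha> ([], iota n \<alpha> \<beta>', []) ones \<in> topspace (Gtop n \<alpha>)"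
      unfolding Gtop_def by auto
  next
    fix T assume TT: "germ n \<alpha> ([], iota n \<alpha> \<beta>', []) ones \<in> T \<and> openin (Gtop n \<alpha>) T"
    then have gT: "generate_topology_on (Theta_basis n \<alpha>) T"
      unfolding Gtop_def by (simp add: openin_topology_generated_by_iff)
    obtain kk where kk: "\<forall>v. pref v kk = pref ones kk \<longrightarrow> germ n \<alpha> ([], iota n \<alpha> \<beta>', []) v \<in> T"
      using nbhd[OF c2 t01 gT iG cylnil] TT by blast
    obtain r where r: "r \<ge> kk + L" "trace n (\<alpha> ^ r * (\<alpha> ^ (j1 + K0) * \<beta>' + y)) = 0"
      using trace_zero_often[OF card n2 gen] by blast
    define p where "p = j1 + K0 + r"
    define v where "v = (\<lambda>i. i \<noteq> p \<and> i \<noteq> Suc p)"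
    have apb: "\<alpha> ^ r * (\<alpha> ^ (j1 + K0) * \<beta>' + y) = \<alpha> ^ p * \<beta>' + \<alpha> ^ r * y"
      by (simp add: p_def power_add algebra_simps)
    have bits: "(trace n (\<alpha> ^ p * \<beta>') = 1) = (trace n (\<alpha> ^ r * y) = 1)"
      using bits_eq[OF c2 t01] r(2) apb by metis
    have pv1: "N \<le> p \<Longrightarrow> pref v N = replicate N True" for N
      unfolding v_def by (rule pref_spike(1))
    have pv2: "pref v (p + 2) = replicate p True @ [False, False]"
      unfolding v_def by (rule pref_spike(2))
    have vD: "v \<in> cyl (\<mu> @ \<eta>)" using muetaR pv1[of L] r(1) by (simp add: in_cyl p_def)
    have vmu: "v \<in> cyl \<mu>" using vD cyl_app_sub by blast
    have vT: "germ n \<alpha> ([], iota n \<alpha> \<beta>', []) v \<in> T"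
      using kk pv1[of kk] r(1) by (simp add: pref_ones p_def)
    define ep where "ep = replicate p True @ [False, False]"
    define ep' where "ep' = replicate K0 True @ replicate r True @ [False, False]"
    have m1: "pref v (p + 2) = [] @ ep" using pv2 by (simp add: ep_def)
    have m2: "pref v (p + 2) = \<mu> @ ep'"
      using pv2 muR by (simp add: ep'_def p_def replicate_add)
    have m3: "[] @ iota n \<alpha> \<beta>' ep = \<gamma> @ g ep'"
    proof -
      have "iota n \<alpha> \<beta>' ep = replicate p True @ [False, trace n (\<alpha> ^ p * \<beta>') = 1]"
        by (simp add: ep_def iota_ones del: iota.simps) (simp)
      moreover have "g ep' = g (replicate K0 True) @ replicate r True @ [False, trace n (\<alpha> ^ r * y) = 1]"
        by (simp add: ep'_def K0 iota_ones del: iota.simps) (simp)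
      ultimately show ?thesis using key bits
        by (simp add: p_def replicate_add)
    qed
    have m4: "restr (iota n \<alpha> \<beta>') ep = restr g ep'"
    proof -
      have "restr (iota n \<alpha> \<beta>') ep = id" unfolding ep_def by (rule restr_iota_FF)
      moreover have "restr g ep' = id"
        unfolding restr_def ep'_def
        by (auto simp: fun_eq_iff K0 iota_ones gK0len)
      ultimately show ?thesis by simp
    qed
    have "rel_at (p + 2) ([], iota n \<alpha> \<beta>', []) (\<gamma>, g, \<mu>) v"
      unfolding rel_at_def using m1 m2 m3 m4 by blast
    then have "germ_rel ((\<gamma>, g, \<mu>), v) (([], iota n \<alpha> \<beta>', []), v)"
      using germ_rel_iff rel_at_sym by blast
    then have "germ n \<alpha> (\<gamma>, g, \<mu>) v = germ n \<alpha> ([], iota n \<alpha> \<beta>', []) v"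
      by (rule germ_eq[OF c2 t01, rotated 2]) (auto simp: germ_reps_iff gG iG vmu cylnil)
    moreover have "germ n \<alpha> (\<gamma>, g, \<mu>) v \<in> D" unfolding D_def Theta_def using vD by blast
    ultimately show "\<exists>y. y \<in> D \<and> y \<in> T" using vT by auto
  qed
qed

theorem mainTheorem7:
  fixes n :: nat and \<alpha> :: "'k::{field,finite}"
    and \<gamma> \<mu> \<eta> :: "bool list" and g :: "bool list \<Rightarrow> bool list"
  assumes "n \<ge> 2"
    and "CARD('k) = 2 ^ n"
    and "\<forall>x::'k. x \<noteq> 0 \<longrightarrow> (\<exists>i::nat. x = \<alpha> ^ i)"
    and "g \<in> Ggrp n \<alpha>"
  shows "(\<exists>h\<in>N0 n \<alpha>. germ n \<alpha> ([], h, []) ones \<in>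
            Gtop n \<alpha> closure_of Theta n \<alpha> (\<gamma>, g, \<mu>) (cyl (\<mu> @ \<eta>)))
     \<longleftrightarrow> (\<forall>h\<in>N0 n \<alpha>. germ n \<alpha> ([], h, []) ones \<in>
            Gtop n \<alpha> closure_of Theta n \<alpha> (\<gamma>, g, \<mu>) (cyl (\<mu> @ \<eta>)))"
proof
  assume "\<exists>h\<in>N0 n \<alpha>. germ n \<alpha> ([], h, []) ones \<in>
            Gtop n \<alpha> closure_of Theta n \<alpha> (\<gamma>, g, \<mu>) (cyl (\<mu> @ \<eta>))"
  then obtain \<beta> where b: "germ n \<alpha> ([], iota n \<alpha> \<beta>, []) ones \<in>
            Gtop n \<alpha> closure_of Theta n \<alpha> (\<gamma>, g, \<mu>) (cyl (\<mu> @ \<eta>))"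
    unfolding N0_def by blast
  show "\<forall>h\<in>N0 n \<alpha>. germ n \<alpha> ([], h, []) ones \<in>
            Gtop n \<alpha> closure_of Theta n \<alpha> (\<gamma>, g, \<mu>) (cyl (\<mu> @ \<eta>))"
    unfolding N0_def using transfer[OF assms b] by blast
next
  assume "\<forall>h\<in>N0 n \<alpha>. germ n \<alpha> ([], h, []) ones \<in>
            Gtop n \<alpha> closure_of Theta n \<alpha> (\<gamma>, g, \<mu>) (cyl (\<mu> @ \<eta>))"
  moreover have "iota n \<alpha> 0 \<in> N0 n \<alpha>" unfolding N0_def by blast
  ultimately show "\<exists>h\<in>N0 n \<alpha>. germ n \<alpha> ([], h, []) ones \<in>
            Gtop n \<alpha> closure_of Theta n \<alpha> (\<gamma>, g, \<mu>) (cyl (\<mu> @ \<eta>))" by blast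
qed

end
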